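(* Let $A$ be a nonempty finite set of $n$ alternatives. A choice rule $C$ on $A$ is (capacity-constrained) lexicographic if and only if it satisfies capacity-filling, gross substitutes, monotonicity, and the irrelevance of accepted alternatives.
   Context: Let $\mathcal{A}$ be the set of all nonempty subsets of $A$. A (capacity-constrained) choice rule is a map $C$ assigning to each problem $(S,q)\in\mathcal{A}\times\{1,\dots,n\}$ a nonempty set $C(S,q)\subseteq S$ with $|C(S,q)|\le q$; write $R(S,q)=S\setminus C(S,q)$ for the rejected alternatives. A priority ordering is a complete, transitive and antisymmetric binary relation on $A$; a priority profile is an ordered list $(\succ_1,\dots,\succ_n)$ of $n$ priority orderings. $C$ is (capacity-constrained) lexicographic for $(\succ_1,\dots,\succ_n)$ if for every $(S,q)$, $C(S,q)$ is the set obtained by choosing the $\succ_1$-highest alternative in $S$, then the $\succ_2$-highest alternative among the remaining alternatives of $S$, and so on, until $q$ alternatives have been chosen or no alternative is left. $C$ is (capacity-constrained) lexicographic if it is lexicographic for some priority profile. Capacity-filling: for each $(S,q)$, $|C(S,q)|=\min\{|S|,q\}$. Gross substitutes: for each $(S,q)$ and each $a,b\in S$ with $a\neq b$, if $a\in C(S,q)$ then $a\in C(S\setminus\{b\},q)$. Monotonicity: for each $S\in\mathcal{A}$ and $q\in\{1,\dots,n-1\}$, $C(S,q)\subseteq C(S,q+1)$. Irrelevance of accepted alternatives: for each $S,S'\in\mathcal{A}$ and $q\in\{1,\dots,n-1\}$, if $R(S,q)=R(S',q)$ then $C(S,q+1)\cap R(S,q)=C(S',q+1)\cap R(S',q)$.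 *)

theory Defs
  imports Main
begin

text \<open>Alternatives form a finite nonempty set A; n = card A.
  A choice rule is C :: 'a set => nat => 'a set; only its values on problems
  (S,q) with S a nonempty subset of A and 1 <= q <= n matter.\<close>

definition problem :: "'a set \<Rightarrow> 'a set \<Rightarrow> nat \<Rightarrow> bool" where
  "problem A S q \<longleftrightarrow> S \<noteq> {} \<and> S \<subseteq> A \<and> 1 \<le> q \<and> q \<le> card A"

definition choice_rule :: "'a set \<Rightarrow> ('a set \<Rightarrow> nat \<Rightarrow> 'a set) \<Rightarrow> bool" where
  "choice_rule A C \<longleftrightarrow> (\<forall>S q. problem A S q \<longrightarrow>
      C S q \<noteq> {} \<and> C S q \<subseteq> S \<and> card (C S q) \<le> q)"

definition rejected :: "('a set \<Rightarrow> nat \<Rightarrow> 'a set) \<Rightarrow> 'a set \<Rightarrow> nat \<Rightarrow> 'a set" where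
  "rejected C S q = S - C S q"

text \<open>A priority ordering on A: complete, transitive, antisymmetric relation on A.
  (x,y) \<in> r means x has (weakly) higher priority than y.\<close>
definition priority_ordering :: "'a set \<Rightarrow> 'a rel \<Rightarrow> bool" where
  "priority_ordering A r \<longleftrightarrow> r \<subseteq> A \<times> A \<and> (\<forall>x\<in>A. \<forall>y\<in>A. (x, y) \<in> r \<or> (y, x) \<in> r)
     \<and> trans r \<and> antisym r"

definition highest :: "'a rel \<Rightarrow> 'a set \<Rightarrow> 'a" where
  "highest r S = (THE x. x \<in> S \<and> (\<forall>y\<in>S. (x, y) \<in> r))"

fun lex_choose :: "'a rel list \<Rightarrow> 'a set \<Rightarrow> 'a set" where
  "lex_choose [] S = {}"
| "lex_choose (r # rs) S =
     (if S = {} then {} else insert (highest r S) (lex_choose rs (S - {highest r S})))"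

definition lexicographic_for :: "'a set \<Rightarrow> 'a rel list \<Rightarrow> ('a set \<Rightarrow> nat \<Rightarrow> 'a set) \<Rightarrow> bool" where
  "lexicographic_for A ps C \<longleftrightarrow>
     (\<forall>S q. problem A S q \<longrightarrow> C S q = lex_choose (take q ps) S)"

definition lexicographic :: "'a set \<Rightarrow> ('a set \<Rightarrow> nat \<Rightarrow> 'a set) \<Rightarrow> bool" where
  "lexicographic A C \<longleftrightarrow> (\<exists>ps. length ps = card A \<and> (\<forall>r\<in>set ps. priority_ordering A r)
      \<and> lexicographic_for A ps C)"

definition capacity_filling :: "'a set \<Rightarrow> ('a set \<Rightarrow> nat \<Rightarrow> 'a set) \<Rightarrow> bool" where
  "capacity_filling A C \<longleftrightarrow> (\<forall>S q. problem A S q \<longrightarrow> card (C S q) = min (card S) q)"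

definition gross_substitutes :: "'a set \<Rightarrow> ('a set \<Rightarrow> nat \<Rightarrow> 'a set) \<Rightarrow> bool" where
  "gross_substitutes A C \<longleftrightarrow> (\<forall>S q a b. problem A S q \<longrightarrow> a \<in> S \<longrightarrow> b \<in> S \<longrightarrow> a \<noteq> b \<longrightarrow>
      a \<in> C S q \<longrightarrow> a \<in> C (S - {b}) q)"

definition monotonicity :: "'a set \<Rightarrow> ('a set \<Rightarrow> nat \<Rightarrow> 'a set) \<Rightarrow> bool" where
  "monotonicity A C \<longleftrightarrow> (\<forall>S q. S \<noteq> {} \<longrightarrow> S \<subseteq> A \<longrightarrow> 1 \<le> q \<longrightarrow> q \<le> card A - 1 \<longrightarrow>
      C S q \<subseteq> C S (q + 1))"

definition irrelevance_of_accepted :: "'a set \<Rightarrow> ('a set \<Rightarrow> nat \<Rightarrow> 'a set) \<Rightarrow> bool" where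
  "irrelevance_of_accepted A C \<longleftrightarrow> (\<forall>S S' q. S \<noteq> {} \<longrightarrow> S \<subseteq> A \<longrightarrow> S' \<noteq> {} \<longrightarrow> S' \<subseteq> A \<longrightarrow>
      1 \<le> q \<longrightarrow> q \<le> card A - 1 \<longrightarrow> rejected C S q = rejected C S' q \<longrightarrow>
      C S (q + 1) \<inter> rejected C S q = C S' (q + 1) \<inter> rejected C S' q)"

end

theory Submission
  imports Defs
begin

lemma po_refl: "priority_ordering A r \<Longrightarrow> x \<in> A \<Longrightarrow> (x,x) \<in> r"
  unfolding priority_ordering_def by blast

lemma po_max_exists:
  assumes po: "priority_ordering A r" and fin: "finite X" and ne: "X \<noteq> {}" and sub: "X \<subseteq> A"
  shows "\<exists>x\<in>X. \<forall>y\<in>X. (x,y) \<in> r"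
  using fin ne sub
proof (induction X rule: finite_ne_induct)
  case (singleton x)
  then show ?case using po_refl[OF po] by auto
next
  case (insert x F)
  then obtain m where m: "m \<in> F" "\<forall>y\<in>F. (m,y) \<in> r" by auto
  have xA: "x \<in> A" and "m \<in> A" using insert m by auto
  then have "(m,x) \<in> r \<or> (x,m) \<in> r" using po unfolding priority_ordering_def by blast
  then show ?case
  proof
    assume "(m,x) \<in> r" then show ?thesis using m by auto
  next
    assume xm: "(x,m) \<in> r"
    have "\<forall>y\<in>F. (x,y) \<in> r" using m xm po unfolding priority_ordering_def trans_def by blast
    then show ?thesis using po_refl[OF po xA] by auto
  qed
qed

lemma highest_eq:
  assumes "antisym r" "x \<in> X" "\<forall>y\<in>X. (x,y) \<in> r"
  shows "highest r X = x"
  unfolding highest_def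
proof (rule the_equality)
  show "x \<in> X \<and> (\<forall>y\<in>X. (x, y) \<in> r)" using assms by auto
next
  fix y assume "y \<in> X \<and> (\<forall>z\<in>X. (y, z) \<in> r)"
  then have "(y,x) \<in> r" "(x,y) \<in> r" using assms by auto
  then show "y = x" using assms(1) unfolding antisym_def by blast
qed

lemma highest_prop:
  assumes po: "priority_ordering A r" and fin: "finite A" and ne: "X \<noteq> {}" and sub: "X \<subseteq> A"
  shows "highest r X \<in> X \<and> (\<forall>y\<in>X. (highest r X, y) \<in> r)"
proof -
  obtain x where x: "x \<in> X" "\<forall>y\<in>X. (x,y) \<in> r"
    using po_max_exists[OF po finite_subset[OF sub fin] ne sub] by blast
  have "antisym r" using po unfolding priority_ordering_def by blast
  then have "highest r X = x" using highest_eq[of r x X] x by simp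
  then show ?thesis using x by simp
qed

lemma lex_sub:
  assumes "finite A" "\<forall>r\<in>set rs. priority_ordering A r" "S \<subseteq> A"
  shows "lex_choose rs S \<subseteq> S"
  using assms(2,3)
proof (induction rs arbitrary: S)
  case Nil then show ?case by simp
next
  case (Cons r rs)
  show ?case
  proof (cases "S = {}")
    case True then show ?thesis by simp
  next
    case False
    have h: "highest r S \<in> S" using highest_prop[of A r S] Cons.prems assms(1) False by auto
    have sA: "S - {highest r S} \<subseteq> A" using Cons.prems by blast
    have sub: "lex_choose rs (S - {highest r S}) \<subseteq> S - {highest r S}"
      using Cons.IH[of "S - {highest r S}"] Cons.prems(1) sA by simp
    have eq: "lex_choose (r # rs) S = insert (highest r S) (lex_choose rs (S - {highest r S}))"
      using False by simp
    show ?thesis unfolding eq using h sub by blast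
  qed
qed

lemma lex_card:
  assumes "finite A" "\<forall>r\<in>set rs. priority_ordering A r" "S \<subseteq> A"
  shows "card (lex_choose rs S) = min (card S) (length rs)"
  using assms(2,3)
proof (induction rs arbitrary: S)
  case Nil then show ?case by simp
next
  case (Cons r rs)
  show ?case
  proof (cases "S = {}")
    case True then show ?thesis by simp
  next
    case False
    let ?h = "highest r S"
    have h: "?h \<in> S" using highest_prop[of A r S] Cons.prems assms(1) False by auto
    have sub: "lex_choose rs (S - {?h}) \<subseteq> S - {?h}"
      using lex_sub[of A rs "S - {?h}"] Cons.prems assms(1) by auto
    have fS: "finite S" using Cons.prems assms(1) finite_subset by blast
    have sA: "S - {?h} \<subseteq> A" using Cons.prems by blast
    have c0: "card (lex_choose rs (S - {?h})) = min (card (S - {?h})) (length rs)"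
      using Cons.IH[of "S - {?h}"] Cons.prems(1) sA by simp
    have c: "card (lex_choose rs (S - {?h})) = min (card S - 1) (length rs)"
      using c0 h fS by simp
    have fl: "finite (lex_choose rs (S - {?h}))" using sub fS finite_subset by blast
    have nh: "?h \<notin> lex_choose rs (S - {?h})" using sub by auto
    have "card (lex_choose (r # rs) S) = Suc (card (lex_choose rs (S - {?h})))"
      using False nh fl by simp
    moreover have "card S \<ge> 1" using fS False by (simp add: Suc_le_eq card_gt_0_iff)
    ultimately show ?thesis using c by simp
  qed
qed

lemma lex_gs:
  assumes "finite A" "\<forall>r\<in>set rs. priority_ordering A r" "S \<subseteq> A" "T \<subseteq> S" "x \<in> T" "x \<in> lex_choose rs S"
  shows "x \<in> lex_choose rs T"
  using assms(2-6)
proof (induction rs arbitrary: S T)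
  case Nil then show ?case by simp
next
  case (Cons r rs)
  have po: "priority_ordering A r" using Cons.prems(1) by simp
  have prs: "\<forall>a\<in>set rs. priority_ordering A a" using Cons.prems(1) by simp
  have ne: "S \<noteq> {}" "T \<noteq> {}" using Cons.prems(4,5) by auto
  let ?h = "highest r S"
  have hS: "?h \<in> S" "\<forall>y\<in>S. (?h,y) \<in> r" using highest_prop[OF po assms(1) ne(1) Cons.prems(2)] by auto
  have as: "antisym r" using po unfolding priority_ordering_def by blast
  have eqS: "lex_choose (r # rs) S = insert ?h (lex_choose rs (S - {?h}))" using ne by simp
  have xS: "x = ?h \<or> x \<in> lex_choose rs (S - {?h})" using Cons.prems(5) unfolding eqS by blast
  have sA: "S - {?h} \<subseteq> A" using Cons.prems(2) by blast
  show ?case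
  proof (cases "?h \<in> T")
    case True
    have "\<forall>y\<in>T. (?h,y) \<in> r" using hS Cons.prems(3) by blast
    then have hT: "highest r T = ?h" using highest_eq[OF as True] by blast
    have eqT: "lex_choose (r # rs) T = insert ?h (lex_choose rs (T - {?h}))" using ne hT by simp
    show ?thesis
    proof (cases "x = ?h")
      case True then show ?thesis unfolding eqT by blast
    next
      case False
      then have xl: "x \<in> lex_choose rs (S - {?h})" using xS by simp
      have sub: "T - {?h} \<subseteq> S - {?h}" using Cons.prems(3) by blast
      have xT: "x \<in> T - {?h}" using Cons.prems(4) False by blast
      have "x \<in> lex_choose rs (T - {?h})" using Cons.IH[OF prs sA sub xT xl] .
      then show ?thesis unfolding eqT by blast
    qed
  next
    case False
    let ?h' = "highest r T"
    have eqT: "lex_choose (r # rs) T = insert ?h' (lex_choose rs (T - {?h'}))" using ne by simp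
    have "x \<noteq> ?h" using False Cons.prems(4) by auto
    then have xl: "x \<in> lex_choose rs (S - {?h})" using xS by simp
    show ?thesis
    proof (cases "x = ?h'")
      case True then show ?thesis unfolding eqT by blast
    next
      case False
      have sub: "T - {?h'} \<subseteq> S - {?h}" using \<open>?h \<notin> T\<close> Cons.prems(3) by blast
      have xT: "x \<in> T - {?h'}" using Cons.prems(4) False by blast
      have "x \<in> lex_choose rs (T - {?h'})" using Cons.IH[OF prs sA sub xT xl] .
      then show ?thesis unfolding eqT by blast
    qed
  qed
qed

lemma lex_snoc:
  assumes "finite A" "\<forall>r\<in>set (rs @ [r]). priority_ordering A r" "S \<subseteq> A"
  shows "lex_choose (rs @ [r]) S = lex_choose rs S \<union>
     (if S - lex_choose rs S = {} then {} else {highest r (S - lex_choose rs S)})"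
  using assms(2,3)
proof (induction rs arbitrary: S)
  case Nil then show ?case by auto
next
  case (Cons r' rs)
  show ?case
  proof (cases "S = {}")
    case True then show ?thesis by simp
  next
    case False
    let ?h = "highest r' S"
    let ?L = "lex_choose rs (S - {?h})"
    let ?E = "(if (S - {?h}) - ?L = {} then {} else {highest r ((S - {?h}) - ?L)})"
    have prs: "\<forall>a\<in>set (rs @ [r]). priority_ordering A a" using Cons.prems(1) by simp
    have sA: "S - {?h} \<subseteq> A" using Cons.prems(2) by blast
    have IH: "lex_choose (rs @ [r]) (S - {?h}) = ?L \<union> ?E"
      using Cons.IH[OF prs sA] .
    have eq0: "lex_choose (r' # rs) S = insert ?h ?L" using False by simp
    have eq: "S - lex_choose (r' # rs) S = (S - {?h}) - ?L" unfolding eq0 by blast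
    have "lex_choose ((r' # rs) @ [r]) S = insert ?h (lex_choose (rs @ [r]) (S - {?h}))"
      using False by simp
    also have "\<dots> = lex_choose (r' # rs) S \<union> ?E"
      unfolding IH eq0 by blast
    finally show ?thesis unfolding eq .
  qed
qed


lemma dir1:
  assumes fin: "finite A" and ne: "A \<noteq> {}" and cr: "choice_rule A C" and lex: "lexicographic A C"
  shows "capacity_filling A C \<and> gross_substitutes A C \<and> monotonicity A C \<and> irrelevance_of_accepted A C"
proof -
  obtain ps where len: "length ps = card A" and po: "\<forall>r\<in>set ps. priority_ordering A r"
    and lf: "lexicographic_for A ps C" using lex unfolding lexicographic_def by blast
  have Ceq: "C S q = lex_choose (take q ps) S" if "problem A S q" for S q
    using lf that unfolding lexicographic_for_def by blast
  have pot: "\<forall>r\<in>set (take q ps). priority_ordering A r" for q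
    using po by (meson in_set_takeD)
  have n1: "card A \<ge> 1" using fin ne by (simp add: Suc_le_eq card_gt_0_iff)
  have cf: "capacity_filling A C"
    unfolding capacity_filling_def
  proof (intro allI impI)
    fix S q assume p: "problem A S q"
    have SA: "S \<subseteq> A" using p unfolding problem_def by blast
    have "card (C S q) = min (card S) (length (take q ps))"
      unfolding Ceq[OF p] using lex_card[OF fin pot SA] .
    then show "card (C S q) = min (card S) q" using len p unfolding problem_def by simp
  qed
  have gs: "gross_substitutes A C"
    unfolding gross_substitutes_def
  proof (intro allI impI)
    fix S q a b assume p: "problem A S q" and a: "a \<in> S" and b: "b \<in> S" and ab: "a \<noteq> b" and aC: "a \<in> C S q"
    have p2: "problem A (S - {b}) q" using p a ab unfolding problem_def by auto
    have SA: "S \<subseteq> A" using p unfolding problem_def by blast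
    have "a \<in> lex_choose (take q ps) (S - {b})"
      using lex_gs[OF fin pot SA, of "S - {b}" a] aC a ab unfolding Ceq[OF p] by blast
    then show "a \<in> C (S - {b}) q" unfolding Ceq[OF p2] .
  qed
  have snoc: "C S (q+1) = C S q \<union> (if S - C S q = {} then {} else {highest (ps ! q) (S - C S q)})"
    if "S \<noteq> {}" "S \<subseteq> A" "1 \<le> q" "q \<le> card A - 1" for S q
  proof -
    have p1: "problem A S q" "problem A S (q+1)" using that n1 unfolding problem_def by auto
    have ql: "q < length ps" using that len n1 by simp
    have tk: "take (q+1) ps = take q ps @ [ps ! q]" using take_Suc_conv_app_nth[OF ql] by simp
    have "\<forall>r\<in>set (take q ps @ [ps ! q]). priority_ordering A r" using pot[of "q+1"] unfolding tk .
    from lex_snoc[OF fin this that(2)] show ?thesis unfolding Ceq[OF p1(1)] Ceq[OF p1(2)] tk .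
  qed
  have sform: "C S (q+1) \<inter> (S - C S q) = (if S - C S q = {} then {} else {highest (ps ! q) (S - C S q)})"
    if "S \<noteq> {}" "S \<subseteq> A" "1 \<le> q" "q \<le> card A - 1" for S q
  proof (cases "S - C S q = {}")
    case True show ?thesis unfolding True by simp
  next
    case False
    have ql: "q < length ps" using that len n1 by simp
    have por: "priority_ordering A (ps ! q)" using po ql by simp
    have "highest (ps ! q) (S - C S q) \<in> S - C S q"
      using highest_prop[OF por fin False] that(2) by blast
    then show ?thesis unfolding snoc[OF that] using False by auto
  qed
  have mono: "monotonicity A C" unfolding monotonicity_def
  proof (intro allI impI)
    fix S q assume "S \<noteq> {}" "S \<subseteq> A" "1 \<le> q" "q \<le> card A - 1"
    then show "C S q \<subseteq> C S (q + 1)" unfolding snoc[OF \<open>S \<noteq> {}\<close> \<open>S \<subseteq> A\<close> \<open>1 \<le> q\<close> \<open>q \<le> card A - 1\<close>] by blast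
  qed
  have iaa: "irrelevance_of_accepted A C" unfolding irrelevance_of_accepted_def rejected_def
  proof (intro allI impI)
    fix S S' q assume a: "S \<noteq> {}" "S \<subseteq> A" "S' \<noteq> {}" "S' \<subseteq> A" "1 \<le> q" "q \<le> card A - 1"
      and eq: "S - C S q = S' - C S' q"
    show "C S (q + 1) \<inter> (S - C S q) = C S' (q + 1) \<inter> (S' - C S' q)"
      using sform[OF a(1,2,5,6)] sform[OF a(3,4,5,6)] eq by (metis (no_types))
  qed
  show ?thesis using cf gs mono iaa by blast
qed

lemma gs_iter:
  assumes fin: "finite A" and gs: "gross_substitutes A C" and S: "S \<subseteq> A" and T: "T \<subseteq> S"
    and x: "x \<in> T" and xC: "x \<in> C S q" and q: "1 \<le> q" "q \<le> card A"
  shows "x \<in> C T q"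
proof -
  have fD: "finite (S - T)" using fin S finite_subset by blast
  have main: "D \<subseteq> S \<longrightarrow> x \<notin> D \<longrightarrow> x \<in> C (S - D) q" if "finite D" for D
    using that
  proof (induction D rule: finite_induct)
    case empty then show ?case using xC by simp
  next
    case (insert d D)
    show ?case
    proof (intro impI)
      assume dD: "insert d D \<subseteq> S" and xn: "x \<notin> insert d D"
      have IH: "x \<in> C (S - D) q" using insert.IH dD xn by blast
      have p: "problem A (S - D) q" unfolding problem_def using x T S q dD xn by blast
      have "x \<in> C ((S - D) - {d}) q"
        using gs[unfolded gross_substitutes_def, rule_format, OF p, of x d] IH x T dD xn insert.hyps by blast
      moreover have "S - insert d D = (S - D) - {d}" by blast
      ultimately show "x \<in> C (S - insert d D) q" by simp
    qed
  qed
  have "S - (S - T) = T" using T by blast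
  then show ?thesis using main[OF fD] x by auto
qed

lemma alpha_order:
  assumes fin: "finite A"
    and mem: "\<And>T. T \<noteq> {} \<Longrightarrow> T \<subseteq> A \<Longrightarrow> g T \<in> T"
    and alpha: "\<And>T T'. T \<subseteq> A \<Longrightarrow> T' \<subseteq> T \<Longrightarrow> g T \<in> T' \<Longrightarrow> g T' = g T"
  shows "priority_ordering A {(x,y). x \<in> A \<and> y \<in> A \<and> g {x,y} = x}
     \<and> (\<forall>T. T \<noteq> {} \<longrightarrow> T \<subseteq> A \<longrightarrow> highest {(x,y). x \<in> A \<and> y \<in> A \<and> g {x,y} = x} T = g T)"
proof -
  define r where "r = {(x,y). x \<in> A \<and> y \<in> A \<and> g {x,y} = x}"
  have pair: "g {x,y} = x \<or> g {x,y} = y" if "x \<in> A" "y \<in> A" for x y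
    using mem[of "{x,y}"] that by auto
  have tot: "\<forall>x\<in>A. \<forall>y\<in>A. (x, y) \<in> r \<or> (y, x) \<in> r"
    unfolding r_def using pair by (auto simp: insert_commute)
  have anti: "antisym r" unfolding r_def antisym_def by (auto simp: insert_commute)
  have tr: "trans r"
  proof (rule transI)
    fix x y z assume xy: "(x,y) \<in> r" and yz: "(y,z) \<in> r"
    have A: "x \<in> A" "y \<in> A" "z \<in> A" and gxy: "g {x,y} = x" and gyz: "g {y,z} = y"
      using xy yz unfolding r_def by auto
    have w: "g {x,y,z} \<in> {x,y,z}" using mem[of "{x,y,z}"] A by auto
    have sA: "{x,y,z} \<subseteq> A" using A by blast
    consider "g {x,y,z} = x" | "g {x,y,z} = y" | "g {x,y,z} = z" using w by blast
    then show "(x,z) \<in> r"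
    proof cases
      case 1
      then have "g {x,z} = x" using alpha[OF sA, of "{x,z}"] by auto
      then show ?thesis using A unfolding r_def by auto
    next
      case 2
      then have "g {x,y} = y" using alpha[OF sA, of "{x,y}"] by auto
      then have "x = y" using gxy by simp
      then show ?thesis using yz by simp
    next
      case 3
      then have "g {y,z} = z" using alpha[OF sA, of "{y,z}"] by auto
      then have "y = z" using gyz by simp
      then show ?thesis using xy by simp
    qed
  qed
  have po: "priority_ordering A r" unfolding priority_ordering_def using tot anti tr by (auto simp: r_def)
  have hi: "highest r T = g T" if "T \<noteq> {}" "T \<subseteq> A" for T
  proof (rule highest_eq[OF anti])
    show gT: "g T \<in> T" using mem that by blast
    show "\<forall>y\<in>T. (g T, y) \<in> r"
    proof
      fix y assume y: "y \<in> T"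
      have "g {g T, y} = g T" using alpha[OF that(2), of "{g T, y}"] gT y by auto
      then show "(g T, y) \<in> r" using y that gT unfolding r_def by auto
    qed
  qed
  show ?thesis using po hi unfolding r_def by blast
qed


lemma dir2:
  assumes fin: "finite A" and ne: "A \<noteq> {}" and cr: "choice_rule A C"
    and cf: "capacity_filling A C" and gs: "gross_substitutes A C" and mo: "monotonicity A C"
    and ia: "irrelevance_of_accepted A C"
  shows "lexicographic A C"
proof -
  define n where "n = card A"
  have n1: "n \<ge> 1" using fin ne unfolding n_def by (simp add: Suc_le_eq card_gt_0_iff)
  define K where "K k = (if k = 0 then {} else C A k)" for k
  define f where "f k T = the_elem (C (T \<union> K k) (k+1) \<inter> T)" for k T
  define B where "B k = A - K k" for k
  define g where "g k T = (if T \<inter> B k \<noteq> {} then f k (T \<inter> B k) else f 0 T)" for k T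
  define ord where "ord h = {(x,y). x \<in> A \<and> y \<in> A \<and> h {x,y} = x}" for h :: "'a set \<Rightarrow> 'a"
  define ps where "ps = map (\<lambda>k. ord (g k)) [0..<n]"
  have cfq: "card (C S q) = min (card S) q" if "S \<noteq> {}" "S \<subseteq> A" "1 \<le> q" "q \<le> n" for S q
    using cf that unfolding capacity_filling_def problem_def n_def by blast
  have crq: "C S q \<subseteq> S" "card (C S q) \<le> q" if "S \<noteq> {}" "S \<subseteq> A" "1 \<le> q" "q \<le> n" for S q
    using cr that unfolding choice_rule_def problem_def n_def by blast+
  have gsi: "x \<in> C T q" if "S \<subseteq> A" "T \<subseteq> S" "x \<in> T" "x \<in> C S q" "1 \<le> q" "q \<le> n" for S T x q
    using gs_iter[OF fin gs that(1-4)] that unfolding n_def by blast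
  have moq: "C S q \<subseteq> C S (q+1)" if "S \<noteq> {}" "S \<subseteq> A" "1 \<le> q" "q + 1 \<le> n" for S q
    using mo that unfolding monotonicity_def n_def by simp
  have finS: "finite S" if "S \<subseteq> A" for S using fin that finite_subset by blast
  have B0: "B 0 = A" unfolding B_def K_def by simp
  have a: "C (T \<union> K k) (k+1) \<inter> T = {f k T} \<and> (k \<ge> 1 \<longrightarrow> C (T \<union> K k) k = K k)"
    if k: "k < n" and T: "T \<noteq> {}" "T \<subseteq> B k" for k T
  proof (cases "k = 0")
    case True
    have TA: "T \<subseteq> A" using T B0 True by simp
    have "card (C T 1) = 1" using cfq[OF T(1) TA _ n1] T finS[OF TA] by (simp add: Suc_le_eq card_gt_0_iff)
    then obtain x where x: "C T 1 = {x}" using card_1_singleton_iff[of "C T 1"] by auto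
    have "C T 1 \<subseteq> T" using crq(1)[OF T(1) TA _ n1] by simp
    then have "C T 1 \<inter> T = {x}" using x by blast
    then show ?thesis using True unfolding f_def K_def by simp
  next
    case False
    let ?S = "T \<union> K k"
    have KA': "K k = C A k" using False unfolding K_def by simp
    have k1: "1 \<le> k" using False by simp
    have kn: "k \<le> n" "k + 1 \<le> n" using k by simp_all
    have Ksub: "K k \<subseteq> A" unfolding KA' using crq(1)[OF ne _ k1 kn(1)] by blast
    have Kc: "card (K k) = k" unfolding KA' using cfq[OF ne _ k1 kn(1)] k unfolding n_def by simp
    have finK: "finite (K k)" using finS[OF Ksub] .
    have TA: "T \<subseteq> A" and disj: "T \<inter> K k = {}" using T unfolding B_def by blast+
    have SA: "?S \<subseteq> A" using TA Ksub by blast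
    have Sne: "?S \<noteq> {}" using T by blast
    have KC: "K k \<subseteq> C ?S k"
    proof
      fix x assume x: "x \<in> K k"
      have xS: "x \<in> ?S" using x by blast
      have "x \<in> C A k" using x KA' by simp
      then show "x \<in> C ?S k" using gsi[OF _ SA xS _ k1 kn(1)] by blast
    qed
    have cS: "card (C ?S k) \<le> k" using crq(2)[OF Sne SA k1 kn(1)] .
    have fC: "finite (C ?S k)" by (rule finite_subset[OF crq(1)[OF Sne SA k1 kn(1)] finS[OF SA]])
    have CSk: "C ?S k = K k"
      using card_subset_eq[OF fC KC] cS Kc card_mono[OF fC KC] by simp
    have finT: "finite T" using finS[OF TA] .
    have cT: "card T \<ge> 1" using T(1) finT by (simp add: Suc_le_eq card_gt_0_iff)
    have cardS: "card ?S = card T + k" using card_Un_disjoint[OF finT finK disj] Kc by simp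
    have c1: "card (C ?S (k+1)) = k+1" using cfq[OF Sne SA _ kn(2)] cardS cT by simp
    have m: "C ?S k \<subseteq> C ?S (k+1)" using moq[OF Sne SA k1 kn(2)] .
    have KC1: "K k \<subseteq> C ?S (k+1)" using m CSk by simp
    have sub1: "C ?S (k+1) \<subseteq> ?S" using crq(1)[OF Sne SA _ kn(2)] by simp
    have eq: "C ?S (k+1) \<inter> T = C ?S (k+1) - K k" using sub1 disj by blast
    have "card (C ?S (k+1) - K k) = 1"
      using card_Diff_subset[OF finK KC1] c1 Kc by simp
    then obtain x where "C ?S (k+1) - K k = {x}" using card_1_singleton_iff[of "C ?S (k+1) - K k"] by auto
    then have "C ?S (k+1) \<inter> T = {x}" using eq by simp
    then show ?thesis using CSk unfolding f_def by simp
  qed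
  have b: "f k T' = f k T"
    if k: "k < n" and T: "T \<subseteq> B k" "T' \<subseteq> T" "f k T \<in> T'" for k T T'
  proof -
    have Tne: "T \<noteq> {}" "T' \<noteq> {}" using T by blast+
    have a1: "C (T \<union> K k) (k+1) \<inter> T = {f k T}" using a[OF k Tne(1) T(1)] by blast
    have T'B: "T' \<subseteq> B k" using T by blast
    have a2: "C (T' \<union> K k) (k+1) \<inter> T' = {f k T'}" using a[OF k Tne(2) T'B] by blast
    have KA: "K k \<subseteq> A" unfolding K_def using crq(1)[OF ne, of k] k by (cases "k = 0") simp_all
    have SA: "T \<union> K k \<subseteq> A" using T KA unfolding B_def by blast
    have x: "f k T \<in> C (T \<union> K k) (k+1)" using a1 by blast
    have "f k T \<in> C (T' \<union> K k) (k+1)"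
      using gsi[OF SA _ _ x, of "T' \<union> K k"] T k by auto
    then have "f k T \<in> {f k T'}" using a2 T by blast
    then show ?thesis by simp
  qed
  have gmem: "g k T \<in> T" if k: "k < n" and T: "T \<noteq> {}" "T \<subseteq> A" for k T
  proof (cases "T \<inter> B k \<noteq> {}")
    case True
    have "f k (T \<inter> B k) \<in> T \<inter> B k" using a[OF k True] by blast
    then show ?thesis using True unfolding g_def by simp
  next
    case False
    have "C (T \<union> K 0) (0+1) \<inter> T = {f 0 T}" using a[of 0 T] n1 T B0 by simp
    then have "f 0 T \<in> T" by blast
    then show ?thesis using False unfolding g_def by simp
  qed
  have galpha: "g k T' = g k T" if k: "k < n" and T: "T \<subseteq> A" "T' \<subseteq> T" "g k T \<in> T'" for k T T'
  proof (cases "T \<inter> B k \<noteq> {}")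
    case True
    have gT: "g k T = f k (T \<inter> B k)" using True unfolding g_def by simp
    have TB: "T \<inter> B k \<subseteq> B k" by blast
    have "C ((T \<inter> B k) \<union> K k) (k+1) \<inter> (T \<inter> B k) = {f k (T \<inter> B k)}" using a[OF k True TB] by blast
    then have xin: "f k (T \<inter> B k) \<in> T \<inter> B k" by blast
    have xin': "f k (T \<inter> B k) \<in> T' \<inter> B k" using xin T(3) gT by simp
    then have ne': "T' \<inter> B k \<noteq> {}" by blast
    have sub': "T' \<inter> B k \<subseteq> T \<inter> B k" using T(2) by blast
    have "f k (T' \<inter> B k) = f k (T \<inter> B k)" using b[OF k TB sub' xin'] .
    then show ?thesis using gT ne' unfolding g_def by simp
  next
    case False
    have gT: "g k T = f 0 T" using False unfolding g_def by simp
    have ne': "\<not> (T' \<inter> B k \<noteq> {})" using False T by blast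
    have n0: "0 < n" using n1 by simp
    have TB0: "T \<subseteq> B 0" using T(1) B0 by simp
    have x0: "f 0 T \<in> T'" using T(3) gT by simp
    have "f 0 T' = f 0 T" using b[OF n0 TB0 T(2) x0] .
    then show ?thesis using gT ne' unfolding g_def by simp
  qed
  have ordk: "priority_ordering A (ord (g k)) \<and> (\<forall>T. T \<noteq> {} \<longrightarrow> T \<subseteq> A \<longrightarrow> highest (ord (g k)) T = g k T)"
    if k: "k < n" for k
    unfolding ord_def
    by (rule alpha_order[OF fin]) (use gmem[OF k] galpha[OF k] in blast)+
  have len: "length ps = card A" unfolding ps_def n_def by simp
  have pos: "\<forall>r\<in>set ps. priority_ordering A r" unfolding ps_def using ordk by auto
  have psk: "ps ! k = ord (g k)" if "k < n" for k unfolding ps_def using that by simp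
  have Ksub: "K q \<subseteq> A" if "q < n" for q unfolding K_def using crq(1)[OF ne, of q] that by (cases "q = 0") simp_all
  have e: "S - C S q \<subseteq> B q" if "S \<noteq> {}" "S \<subseteq> A" "1 \<le> q" "q \<le> n" for S q
  proof
    fix x assume x: "x \<in> S - C S q"
    have "x \<notin> C A q"
    proof
      assume "x \<in> C A q"
      then have "x \<in> C S q" using gsi[OF _ that(2), of x q] x that by blast
      then show False using x by blast
    qed
    then show "x \<in> B q" unfolding B_def K_def using x that by auto
  qed
  have main: "\<forall>S. S \<noteq> {} \<longrightarrow> S \<subseteq> A \<longrightarrow> C S q = lex_choose (take q ps) S" if "1 \<le> q" "q \<le> n" for q
    using that
  proof (induction q)
    case 0 then show ?case by simp
  next
    case (Suc q)
    show ?case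
    proof (intro allI impI)
      fix S assume S: "S \<noteq> {}" "S \<subseteq> A"
      show "C S (Suc q) = lex_choose (take (Suc q) ps) S"
      proof (cases "q = 0")
        case True
        have l0: "0 < length ps" using n1 unfolding ps_def by simp
        have t1: "take (Suc q) ps = [ord (g 0)]" using True take_Suc_conv_app_nth[OF l0] psk[of 0] n1 by simp
        have SB: "S \<inter> B 0 = S" using B0 S by blast
        have hg: "highest (ord (g 0)) S = g 0 S" using ordk[of 0] n1 S by simp
        have "C S 1 \<inter> S = {f 0 S}" using a[of 0 S] n1 S B0 unfolding K_def by simp
        moreover have "C S 1 \<subseteq> S" using crq(1)[OF S _ n1] by simp
        ultimately have "C S 1 = {f 0 S}" by blast
        moreover have "g 0 S = f 0 S" using SB S unfolding g_def by simp
        moreover have "lex_choose [ord (g 0)] S = {highest (ord (g 0)) S}" using S(1) by simp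
        ultimately show ?thesis unfolding t1 using True hg by simp
      next
        case False
        have q1: "1 \<le> q" and qn: "q < n" using False Suc.prems by auto
        have IH: "C S q = lex_choose (take q ps) S" using Suc.IH q1 qn S by simp
        have ql: "q < length ps" using qn unfolding ps_def by simp
        have tk: "take (Suc q) ps = take q ps @ [ps ! q]" using take_Suc_conv_app_nth[OF ql] .
        have pot: "\<forall>r\<in>set (take q ps @ [ps ! q]). priority_ordering A r"
          using pos unfolding tk[symmetric] by (meson in_set_takeD)
        have L: "lex_choose (take (Suc q) ps) S = C S q \<union>
            (if S - C S q = {} then {} else {highest (ps ! q) (S - C S q)})"
          unfolding tk using lex_snoc[OF fin pot S(2)] unfolding IH .
        have m: "C S q \<subseteq> C S (Suc q)" using moq[OF S q1] qn by simp
        have sub: "C S (Suc q) \<subseteq> S" using crq(1)[OF S, of "Suc q"] Suc.prems by simp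
        have split: "C S (Suc q) = C S q \<union> (C S (Suc q) \<inter> (S - C S q))" using m sub by blast
        show ?thesis
        proof (cases "S - C S q = {}")
          case True
          have "C S (Suc q) = C S q" using m sub True by blast
          then show ?thesis unfolding L using True by simp
        next
          case R: False
          let ?R = "S - C S q"
          have RB: "?R \<subseteq> B q" using e[OF S q1] qn by simp
          have RA: "?R \<subseteq> A" using S by blast
          have gR: "g q ?R = f q ?R" using RB R unfolding g_def by (simp add: Int_absorb2)
          have hR: "highest (ps ! q) ?R = f q ?R" using ordk[OF qn] psk[OF qn] R RA gR by simp
          have aR: "C (?R \<union> K q) (q+1) \<inter> ?R = {f q ?R}" and CK: "C (?R \<union> K q) q = K q"
            using a[OF qn R RB] q1 by auto
          have disj: "?R \<inter> K q = {}" using RB unfolding B_def by blast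
          have rej: "(?R \<union> K q) - C (?R \<union> K q) q = ?R" using CK disj by blast
          have S'A: "?R \<union> K q \<subseteq> A" using RA Ksub[OF qn] by blast
          have S'ne: "?R \<union> K q \<noteq> {}" using R by blast
          have qle: "q \<le> card A - 1" using qn unfolding n_def by simp
          have rejeq: "rejected C S q = rejected C (?R \<union> K q) q" unfolding rejected_def using rej by simp
          have "C S (q + 1) \<inter> rejected C S q = C (?R \<union> K q) (q + 1) \<inter> rejected C (?R \<union> K q) q"
            using ia[unfolded irrelevance_of_accepted_def, rule_format, OF S S'ne S'A q1 qle rejeq] .
          then have "C S (q + 1) \<inter> ?R = C (?R \<union> K q) (q + 1) \<inter> ((?R \<union> K q) - C (?R \<union> K q) q)"
            unfolding rejected_def .
          then have "C S (Suc q) \<inter> ?R = {f q ?R}" using aR rej by simp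
          then have "C S (Suc q) = C S q \<union> {f q ?R}" using m sub by blast
          then show ?thesis unfolding L hR using R by simp
        qed
      qed
    qed
  qed
  have "lexicographic_for A ps C" unfolding lexicographic_for_def problem_def
    using main unfolding n_def by blast
  then show ?thesis unfolding lexicographic_def using len pos by blast
qed


theorem theorem1:
  fixes A :: "'a set" and C :: "'a set \<Rightarrow> nat \<Rightarrow> 'a set"
  assumes "finite A" and "A \<noteq> {}" and "choice_rule A C"
  shows "lexicographic A C \<longleftrightarrow>
    capacity_filling A C \<and> gross_substitutes A C \<and> monotonicity A C \<and> irrelevance_of_accepted A C"
proof
  assume "lexicographic A C"
  then show "capacity_filling A C \<and> gross_substitutes A C \<and> monotonicity A C \<and> irrelevance_of_accepted A C"
    using dir1[OF assms] by blast
next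
  assume h: "capacity_filling A C \<and> gross_substitutes A C \<and> monotonicity A C \<and> irrelevance_of_accepted A C"
  show "lexicographic A C"
    using dir2[OF assms] h by blast
qed

end
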